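(* Let $d \ge 1$. Given $\varepsilon > 0$ and $0 < \delta < 1$, there exists $k \in \mathbb{N}$ such that for any sequence of linear isomorphisms $L_1, \ldots, L_n : \mathbb{R}^d \to \mathbb{R}^d$ with $n \ge k$, there exists $\tau_0 > 0$ such that for every $0 < \tau < \tau_0$ the following holds. Define the boxes $$U_0 = [-1,1]^{d-1} \times [-\tau,\tau],\quad V_0 = [-(1-\delta),1-\delta]^{d-1} \times [-(1-\delta)\tau,(1-\delta)\tau],\quad W_0 = [-1,1]^{d-1}\times[-\delta\tau,\delta\tau],$$ and for $1 \le i \le n$ let $U_i = L_i^{-1}U_{i-1}$, $V_i = L_i^{-1}V_{i-1}$, $W_i = L_i^{-1}W_{i-1}$. Then there exist $C^1$ diffeomorphisms $H_1, \ldots, H_n : \mathbb{R}^d \to \mathbb{R}^d$ such that each $H_i$ has derivative $\varepsilon$-close to the identity (i.e. $\|DH_i(x) - \mathrm{id}\| \le \varepsilon$ for all $x$), $H_i = \mathrm{id}$ outside $U_i$, and for all $i$ with $k \le i \le n$, $$L_{i-k+1}\circ H_{i-k+1}\circ\cdots\circ L_{i-1}\circ H_{i-1}\circ L_i\circ H_i(V_i) \subset W_{i-k}.$$ Moreover, the $H_i$ can be chosen so that for each $1 \le i \le n$, $H_i$ depends only on $\varepsilon$, $\delta$, $\tau$ and $L_1, \ldots, L_i$ (and not on $L_{i+1}, \ldots, L_n$). *)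

theory Defs
  imports "HOL-Analysis.Analysis"
begin

text \<open>Boxes in R^d = real^'n, where the coordinate j plays the role of the
  last coordinate: [-a,a]^(d-1) x [-b,b].\<close>
definition jbox :: "'n::finite \<Rightarrow> real \<Rightarrow> real \<Rightarrow> (real^'n) set" where
  "jbox j a b = {x. (\<forall>i. i \<noteq> j \<longrightarrow> \<bar>x $ i\<bar> \<le> a) \<and> \<bar>x $ j\<bar> \<le> b}"

fun iter_pre :: "(nat \<Rightarrow> 'a \<Rightarrow> 'a) \<Rightarrow> 'a set \<Rightarrow> nat \<Rightarrow> 'a set" where
  "iter_pre L S 0 = S"
| "iter_pre L S (Suc i) = L (Suc i) -` iter_pre L S i"

fun chain :: "(nat \<Rightarrow> 'a \<Rightarrow> 'a) \<Rightarrow> (nat \<Rightarrow> 'a \<Rightarrow> 'a) \<Rightarrow> nat \<Rightarrow> nat \<Rightarrow> 'a \<Rightarrow> 'a" where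
  "chain L H a 0 = id"
| "chain L H a (Suc m) = chain L H a m \<circ> (L (a + m) \<circ> H (a + m))"

definition C1_map :: "(real^'n::finite \<Rightarrow> real^'n) \<Rightarrow> bool" where
  "C1_map f \<longleftrightarrow> (\<exists>f' :: real^'n \<Rightarrow> ((real^'n) \<Rightarrow>\<^sub>L (real^'n)).
      (\<forall>x. (f has_derivative blinfun_apply (f' x)) (at x)) \<and> continuous_on UNIV f')"

definition C1_diffeo :: "(real^'n::finite \<Rightarrow> real^'n) \<Rightarrow> bool" where
  "C1_diffeo f \<longleftrightarrow> bij f \<and> C1_map f \<and> C1_map (inv f)"

definition deriv_close :: "real \<Rightarrow> (real^'n::finite \<Rightarrow> real^'n) \<Rightarrow> bool" where
  "deriv_close e f \<longleftrightarrow> (\<forall>x D. (f has_derivative D) (at x) \<longrightarrow> onorm (\<lambda>v. D v - v) \<le> e)"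

end

theory Submission
  imports Defs
begin


definition pp :: "real \<Rightarrow> real" where "pp t = (max 0 t)^2"
definition ppd :: "real \<Rightarrow> real" where "ppd t = 2 * max 0 t"

lemma pp_deriv: "(pp has_real_derivative ppd x) (at x)"
proof (cases "x = 0")
  case True
  have "((\<lambda>y. (pp y - pp 0) / (y - 0)) \<longlongrightarrow> 0) (at 0)"
  proof (rule Lim_null_comparison[where g="\<lambda>y. norm y"])
    have "norm ((pp y - pp 0) / (y - 0)) \<le> norm y" for y
    proof -
      have a: "0 \<le> pp y" "pp y \<le> y * y"
        unfolding pp_def power2_eq_square by (auto simp: max_def mult_le_cancel_left)
      have "pp 0 = 0" by (simp add: pp_def)
      then have "norm ((pp y - pp 0) / (y - 0)) = pp y / \<bar>y\<bar>" using a by simp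
      also have "\<dots> \<le> \<bar>y\<bar>"
      proof (cases "y = 0")
        case False
        then have "0 < \<bar>y\<bar>" by simp
        moreover have "pp y \<le> \<bar>y\<bar> * \<bar>y\<bar>" using a(2) by (simp add: abs_mult_self_eq)
        ultimately show ?thesis by (simp add: pos_divide_le_eq)
      qed simp
      finally show ?thesis by simp
    qed
    then show "\<forall>\<^sub>F y in at 0. norm ((pp y - pp 0) / (y - 0)) \<le> norm y"
      by (simp add: always_eventually)
    show "((\<lambda>y. norm (y::real)) \<longlongrightarrow> 0) (at 0)"
      by (intro tendsto_norm_zero tendsto_ident_at)
  qed
  then show ?thesis using True by (simp add: has_field_derivative_iff ppd_def)
next
  case False
  show ?thesis
  proof (cases "x > 0")
    case True
    have d: "((\<lambda>t. t^2) has_real_derivative 2 * x) (at x)"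
      by (auto intro!: derivative_eq_intros)
    show ?thesis
      apply (rule has_field_derivative_transform_within_open[where S="{0<..}" and f="\<lambda>t. t^2"])
      using d True by (auto simp: pp_def ppd_def)
  next
    case False
    with \<open>x \<noteq> 0\<close> have "x < 0" by simp
    show ?thesis
      apply (rule has_field_derivative_transform_within_open[where S="{..<0}" and f="\<lambda>t. 0"])
      using \<open>x < 0\<close> by (auto simp: pp_def ppd_def)
  qed
qed

lemma pp_deriv_intro[derivative_intros]:
  "(f has_real_derivative f') (at x within S) \<Longrightarrow> ((\<lambda>x. pp (f x)) has_real_derivative ppd (f x) * f') (at x within S)"
  using DERIV_chain2[OF pp_deriv] by blast

lemma continuous_ppd[continuous_intros]: "continuous_on S f \<Longrightarrow> continuous_on S (\<lambda>x. ppd (f x))"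
  unfolding ppd_def by (intro continuous_intros)


lemma shear_diffeo:
  fixes psi :: "real^'n::finite \<Rightarrow> real" and D :: "real^'n \<Rightarrow> real^'n \<Rightarrow> real" and w :: "real^'n"
  assumes der: "\<And>x. (psi has_derivative D x) (at x)"
    and cont: "\<And>v. continuous_on UNIV (\<lambda>x. D x v)"
    and bnd: "\<And>x v. \<bar>D x v\<bar> \<le> q0 * norm v"
    and q: "q0 * norm w < 1"
  shows "C1_diffeo (\<lambda>x. x - psi x *\<^sub>R w) \<and> deriv_close (q0 * norm w) (\<lambda>x. x - psi x *\<^sub>R w)"
proof -
  define H where "H = (\<lambda>x. x - psi x *\<^sub>R w)"
  define H' where "H' = (\<lambda>x v. v - D x v *\<^sub>R w)"
  define q where "q = q0 * norm w"
  have linD: "linear (D x)" for x using der[of x] has_derivative_linear by blast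
  have q0: "0 \<le> q0"
  proof -
    have "0 \<le> \<bar>D 0 (axis undefined 1)\<bar>" by simp
    also have "\<dots> \<le> q0 * norm (axis undefined (1::real) :: real^'n)" by (rule bnd)
    finally show ?thesis by simp
  qed
  have q01: "0 \<le> q" "q < 1" using q0 q by (auto simp: q_def)
  have hasH: "(H has_derivative H' x) (at x)" for x
    unfolding H_def H'_def by (auto intro!: derivative_eq_intros der)
  have onD: "onorm (D x) \<le> q0" for x
    by (rule onorm_le) (use bnd in auto)
  have lip: "norm (psi x - psi y) \<le> q0 * norm (x - y)" for x y
    by (rule differentiable_bound[where S=UNIV and f'=D]) (auto intro: has_derivative_at_withinI der onD)
  have Hlow: "(1 - q) * norm (x - y) \<le> norm (H x - H y)" for x y
  proof -
    have "x - y = (H x - H y) + (psi x - psi y) *\<^sub>R w" by (simp add: H_def algebra_simps)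
    then have "norm (x - y) \<le> norm (H x - H y) + \<bar>psi x - psi y\<bar> * norm w"
      by (metis norm_scaleR norm_triangle_ineq)
    also have "\<bar>psi x - psi y\<bar> * norm w \<le> q0 * norm (x - y) * norm w"
      using lip[of x y] by (intro mult_right_mono) auto
    finally show ?thesis by (simp add: q_def algebra_simps)
  qed
  have injH: "inj H"
  proof (rule injI)
    fix x y assume "H x = H y"
    then have "(1 - q) * norm (x - y) \<le> 0" using Hlow[of x y] by simp
    moreover have "0 < 1 - q" using q01 by simp
    ultimately have "norm (x - y) \<le> 0" by (simp add: mult_le_0_iff)
    then show "x = y" by simp
  qed
  have surjH: "surj H"
  proof -
    have "\<exists>x. H x = y" for y
    proof -
      have "\<exists>!x. (\<lambda>x. y + psi x *\<^sub>R w) x = x"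
      proof (rule banach_fix_type[OF q01])
        show "\<forall>x x'. dist ((\<lambda>x. y + psi x *\<^sub>R w) x) ((\<lambda>x. y + psi x *\<^sub>R w) x') \<le> q * dist x x'"
        proof (intro allI)
          fix x x'
          have "dist (y + psi x *\<^sub>R w) (y + psi x' *\<^sub>R w) = \<bar>psi x - psi x'\<bar> * norm w"
            by (simp add: dist_norm scaleR_diff_left[symmetric])
          also have "\<dots> \<le> q0 * norm (x - x') * norm w"
            using lip[of x x'] by (intro mult_right_mono) auto
          finally show "dist ((\<lambda>x. y + psi x *\<^sub>R w) x) ((\<lambda>x. y + psi x *\<^sub>R w) x') \<le> q * dist x x'"
            by (simp add: q_def dist_norm algebra_simps)
        qed
      qed
      then obtain x where "y + psi x *\<^sub>R w = x" by auto
      then have "H x = y" unfolding H_def by (metis add_diff_cancel_right')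
      then show ?thesis by blast
    qed
    then show ?thesis by (metis surjI)
  qed
  define g where "g = inv H"
  have Hg: "H (g y) = y" for y unfolding g_def by (meson surjH surj_f_inv_f)
  have gH: "g (H x) = x" for x unfolding g_def by (meson injH inv_f_f)
  have glip: "dist (g y) (g y') \<le> (1 / (1 - q)) * dist y y'" for y y'
  proof -
    have "(1 - q) * norm (g y - g y') \<le> norm (y - y')" using Hlow[of "g y" "g y'"] by (simp add: Hg)
    then show ?thesis using q01 by (simp add: dist_norm field_simps)
  qed
  have gcont: "continuous_on UNIV g"
    by (rule lipschitz_on_continuous_on[where L="1 / (1 - q)"]) (use glip q01 in \<open>auto simp: lipschitz_on_def\<close>)
  have Dw: "\<bar>D x w\<bar> < 1" for x using bnd[of x w] q by linarith
  define G' where "G' = (\<lambda>y v. v + (D (g y) v / (1 - D (g y) w)) *\<^sub>R w)"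
  have linG': "linear (G' y)" for y
    unfolding G'_def
    by (rule linearI) (simp_all add: linear_add[OF linD] linear_scale[OF linD] add_divide_distrib scaleR_add_left scaleR_add_right)
  have GH: "G' y (H' (g y) v) = v" for y v
  proof -
    let ?D = "D (g y)"
    have "?D (H' (g y) v) = ?D v - ?D v * ?D w"
      unfolding H'_def by (simp add: linear_diff[OF linD] linear_scale[OF linD])
    also have "\<dots> = ?D v * (1 - ?D w)" by (simp add: algebra_simps)
    finally have e: "?D (H' (g y) v) / (1 - ?D w) = ?D v" using Dw[of "g y"] by simp
    show ?thesis unfolding G'_def e by (simp add: H'_def)
  qed
  have dg: "(g has_derivative G' y) (at y)" for y
  proof (rule has_derivative_inverse_basic[where f=H and f'="H' (g y)" and T=UNIV])
    show "(H has_derivative H' (g y)) (at (g y))" by (rule hasH)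
    show "bounded_linear (G' y)" using linG' linear_conv_bounded_linear by blast
    show "G' y \<circ> H' (g y) = id" using GH by (auto simp: fun_eq_iff)
    show "continuous (at y) g" using gcont by (simp add: continuous_on_eq_continuous_at)
  qed (auto simp: Hg)
  have cg: "continuous_on UNIV (\<lambda>y. D (g y) v)" for v
    using continuous_on_compose2[OF cont gcont] by auto
  have blH: "bounded_linear (H' x)" for x using hasH has_derivative_bounded_linear by blast
  have blG: "bounded_linear (G' y)" for y using linG' linear_conv_bounded_linear by blast
  have C1H: "C1_map H"
    unfolding C1_map_def
  proof (intro exI[of _ "\<lambda>x. Blinfun (H' x)"] conjI allI)
    show "(H has_derivative blinfun_apply (Blinfun (H' x))) (at x)" for x
      using hasH blH by (simp add: bounded_linear_Blinfun_apply)
    show "continuous_on UNIV (\<lambda>x. Blinfun (H' x))"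
    proof (rule continuous_on_blinfun_componentwise)
      fix i :: "real^'n"
      show "continuous_on UNIV (\<lambda>x. blinfun_apply (Blinfun (H' x)) i)"
        using blH by (simp add: bounded_linear_Blinfun_apply H'_def) (intro continuous_intros cont)
    qed
  qed
  have C1g: "C1_map g"
    unfolding C1_map_def
  proof (intro exI[of _ "\<lambda>y. Blinfun (G' y)"] conjI allI)
    show "(g has_derivative blinfun_apply (Blinfun (G' y))) (at y)" for y
      using dg blG by (simp add: bounded_linear_Blinfun_apply)
    show "continuous_on UNIV (\<lambda>y. Blinfun (G' y))"
    proof (rule continuous_on_blinfun_componentwise)
      fix i :: "real^'n"
      have nz: "1 - D (g y) w \<noteq> 0" for y using Dw[of "g y"] by auto
      show "continuous_on UNIV (\<lambda>y. blinfun_apply (Blinfun (G' y)) i)"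
        using blG by (simp add: bounded_linear_Blinfun_apply G'_def) (intro continuous_intros cg ballI nz)
    qed
  qed
  have dc: "deriv_close q H"
    unfolding deriv_close_def
  proof (intro allI impI)
    fix x E assume "(H has_derivative E) (at x)"
    then have "E = H' x" using hasH has_derivative_unique by blast
    then have "(\<lambda>v. E v - v) = (\<lambda>v. - (D x v *\<^sub>R w))" by (simp add: H'_def)
    moreover have "onorm (\<lambda>v. - (D x v *\<^sub>R w)) \<le> q"
    proof (rule onorm_le)
      fix v
      have "norm (- (D x v *\<^sub>R w)) = \<bar>D x v\<bar> * norm w" by simp
      also have "\<dots> \<le> q0 * norm v * norm w" using bnd[of x v] by (intro mult_right_mono) auto
      finally show "norm (- (D x v *\<^sub>R w)) \<le> q * norm v" by (simp add: q_def algebra_simps)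
    qed
    ultimately show "onorm (\<lambda>v. E v - v) \<le> q" by simp
  qed
  have "C1_diffeo H" unfolding C1_diffeo_def g_def[symmetric]
    using injH surjH C1H C1g by (simp add: bij_def)
  then show ?thesis using dc unfolding H_def q_def by simp
qed



definition kap :: "real \<Rightarrow> real" where "kap r = (1 - r^2)^2"
definition cutf :: "real \<Rightarrow> real \<Rightarrow> real" where
  "cutf r u = pp (kap r - pp (u^2 - r^2)) / (kap r)^2"
definition cutfd :: "real \<Rightarrow> real \<Rightarrow> real" where
  "cutfd r u = ppd (kap r - pp (u^2 - r^2)) * (- (ppd (u^2 - r^2) * (2 * u))) / (kap r)^2"

lemma pp_nonneg: "0 \<le> pp t" by (simp add: pp_def)
lemma pp_zero: "t \<le> 0 \<Longrightarrow> pp t = 0" by (simp add: pp_def)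
lemma pp_pos: "0 \<le> t \<Longrightarrow> pp t = t^2" by (simp add: pp_def)
lemma pp_mono: "s \<le> t \<Longrightarrow> pp s \<le> pp t"
  unfolding pp_def by (intro power_mono) auto
lemma ppd_zero: "t \<le> 0 \<Longrightarrow> ppd t = 0" by (simp add: ppd_def)

lemma kap_pos: "0 < r \<Longrightarrow> r < 1 \<Longrightarrow> 0 < kap r"
proof -
  assume "0 < r" "r < 1"
  then have "r^2 < 1" by (simp add: power_less_one_iff)
  then show ?thesis by (simp add: kap_def)
qed

lemma cut_deriv: "(cutf r has_real_derivative cutfd r u) (at u)"
proof -
  have "((\<lambda>u. pp (kap r - pp (u^2 - r^2))) has_real_derivative
      ppd (kap r - pp (u^2 - r^2)) * (- (ppd (u^2 - r^2) * (2 * u)))) (at u)"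
    by (rule derivative_eq_intros refl | simp)+
  from DERIV_cdivide[OF this, of "(kap r)^2"] show ?thesis
    unfolding cutf_def[abs_def] cutfd_def by simp
qed

lemma cut_one: assumes "0 < r" "r < 1" "\<bar>u\<bar> \<le> r" shows "cutf r u = 1"
proof -
  have "\<bar>u\<bar>^2 \<le> r^2" using assms by (intro power_mono) auto
  then have "u^2 \<le> r^2" by simp
  then have "pp (u^2 - r^2) = 0" by (simp add: pp_zero)
  then show ?thesis using kap_pos[OF assms(1,2)] by (simp add: cutf_def pp_pos)
qed

lemma big_pp: assumes "0 < r" "r < 1" "1 \<le> \<bar>u\<bar>" shows "kap r \<le> pp (u^2 - r^2)"
proof -
  have "1 \<le> u^2" using assms by (metis abs_le_square_iff abs_one one_power2)
  then have "1 - r^2 \<le> u^2 - r^2" by simp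
  moreover have "0 \<le> 1 - r^2" using assms by (simp add: power_le_one)
  ultimately have "(1 - r^2)^2 \<le> (u^2 - r^2)^2" by (intro power_mono) auto
  then show ?thesis using \<open>1 - r^2 \<le> u^2 - r^2\<close> \<open>0 \<le> 1 - r^2\<close> by (simp add: kap_def pp_pos)
qed

lemma cut_zero: assumes "0 < r" "r < 1" "1 \<le> \<bar>u\<bar>" shows "cutf r u = 0"
  using big_pp[OF assms] by (simp add: cutf_def pp_zero)

lemma cutd_zero: assumes "0 < r" "r < 1" "1 \<le> \<bar>u\<bar>" shows "cutfd r u = 0"
  using big_pp[OF assms] by (simp add: cutfd_def ppd_zero)

lemma cut_range: assumes "0 < r" "r < 1" shows "0 \<le> cutf r u" "cutf r u \<le> 1"
proof -
  have k: "0 < kap r" using kap_pos[OF assms] .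
  show "0 \<le> cutf r u" by (simp add: cutf_def pp_nonneg)
  have "pp (kap r - pp (u^2 - r^2)) \<le> pp (kap r)" using pp_nonneg by (intro pp_mono) auto
  also have "\<dots> = (kap r)^2" using k by (simp add: pp_pos)
  finally show "cutf r u \<le> 1" using k by (simp add: cutf_def)
qed

lemma cutd_cont: assumes "0 < r" "r < 1" shows "continuous_on S (cutfd r)"
  unfolding cutfd_def[abs_def] pp_def using kap_pos[OF assms] by (intro continuous_intros) auto

lemma cutd_bound: assumes "0 < r" "r < 1" shows "\<exists>B\<ge>0. \<forall>u. \<bar>cutfd r u\<bar> \<le> B"
proof -
  have "compact (cutfd r ` {-1..1})"
    by (intro compact_continuous_image cutd_cont compact_Icc assms)
  then obtain B where B: "\<forall>x\<in>cutfd r ` {-1..1}. norm x \<le> B"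
    using compact_imp_bounded bounded_iff by metis
  have "\<bar>cutfd r u\<bar> \<le> max 0 B" for u
  proof (cases "\<bar>u\<bar> < 1")
    case True
    then have "u \<in> {-1..1}" by auto
    then have "cutfd r u \<in> cutfd r ` {-1..1}" by (rule imageI)
    then have "norm (cutfd r u) \<le> B" using B by blast
    then show ?thesis by simp
  next
    case False then show ?thesis using cutd_zero[OF assms, of u] by simp
  qed
  then show ?thesis by (intro exI[of _ "max 0 B"]) auto
qed

lemma eta_bounds: assumes "0 < r" "r < 1" "\<forall>u. \<bar>cutfd r u\<bar> \<le> B"
  shows "\<bar>u * cutf r u\<bar> \<le> 1" "\<bar>cutf r u + u * cutfd r u\<bar> \<le> 1 + B"
proof -
  have c: "0 \<le> cutf r u" "cutf r u \<le> 1" using cut_range[OF assms(1,2)] by auto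
  show "\<bar>u * cutf r u\<bar> \<le> 1"
  proof (cases "\<bar>u\<bar> < 1")
    case True
    then have "\<bar>u\<bar> * cutf r u \<le> 1 * 1" using c by (intro mult_mono) auto
    then show ?thesis using c by (simp add: abs_mult)
  next
    case False then show ?thesis using cut_zero[OF assms(1,2), of u] by simp
  qed
  show "\<bar>cutf r u + u * cutfd r u\<bar> \<le> 1 + B"
  proof (cases "\<bar>u\<bar> < 1")
    case True
    then have "\<bar>u\<bar> * \<bar>cutfd r u\<bar> \<le> 1 * B" using assms(3) by (intro mult_mono) auto
    then have "\<bar>u * cutfd r u\<bar> \<le> B" by (simp add: abs_mult)
    then show ?thesis using c by linarith
  next
    case False then show ?thesis using cut_zero[OF assms(1,2), of u] cutd_zero[OF assms(1,2), of u] assms(3) by auto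
  qed
qed



definition eta :: "real \<Rightarrow> real \<Rightarrow> real" where "eta r u = u * cutf r u"
definition etad :: "real \<Rightarrow> real \<Rightarrow> real" where "etad r u = cutf r u + u * cutfd r u"
definition theta :: "'n::finite \<Rightarrow> real \<Rightarrow> real^'n \<Rightarrow> real" where
  "theta j r y = (\<Prod>m\<in>-{j}. cutf r (y$m))"
definition thetad :: "'n::finite \<Rightarrow> real \<Rightarrow> real^'n \<Rightarrow> real^'n \<Rightarrow> real" where
  "thetad j r y u = (\<Sum>m\<in>-{j}. cutfd r (y$m) * u$m * (\<Prod>l\<in>-{j}-{m}. cutf r (y$l)))"
definition psi :: "'n::finite \<Rightarrow> real \<Rightarrow> real \<Rightarrow> real \<Rightarrow> real \<Rightarrow> (real^'n \<Rightarrow> real^'n) \<Rightarrow> real^'n \<Rightarrow> real" where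
  "psi j r r' c \<tau> A x = theta j r (A x) * (\<tau> * c * eta r' (A x $ j / \<tau>))"
definition Dpsi :: "'n::finite \<Rightarrow> real \<Rightarrow> real \<Rightarrow> real \<Rightarrow> real \<Rightarrow> (real^'n \<Rightarrow> real^'n) \<Rightarrow> real^'n \<Rightarrow> real^'n \<Rightarrow> real" where
  "Dpsi j r r' c \<tau> A x v = theta j r (A x) * (\<tau> * c * (etad r' (A x $ j / \<tau>) * (A v $ j / \<tau>)))
     + thetad j r (A x) (A v) * (\<tau> * c * eta r' (A x $ j / \<tau>))"

lemma cut_chain: "(f has_derivative f') (at x within S) \<Longrightarrow>
  ((\<lambda>x. cutf r (f x)) has_derivative (\<lambda>v. cutfd r (f x) * f' v)) (at x within S)"
  using has_derivative_compose[OF _ cut_deriv[unfolded has_field_derivative_def]] by blast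

lemma eta_deriv: "(eta r has_real_derivative etad r u) (at u)"
proof -
  have "((\<lambda>u. u * cutf r u) has_real_derivative (u * cutfd r u + 1 * cutf r u)) (at u)"
    by (intro DERIV_mult' DERIV_ident cut_deriv)
  then show ?thesis unfolding eta_def[abs_def] etad_def by (simp add: add.commute)
qed

lemma eta_chain: "(f has_derivative f') (at x within S) \<Longrightarrow>
  ((\<lambda>x. eta r (f x)) has_derivative (\<lambda>v. etad r (f x) * f' v)) (at x within S)"
  using has_derivative_compose[OF _ eta_deriv[unfolded has_field_derivative_def]] by blast

lemma theta_deriv: "(theta j r has_derivative thetad j r y) (at y)"
proof -
  have "((\<lambda>y. \<Prod>m\<in>-{j}. cutf r (y$m)) has_derivative
     (\<lambda>u. \<Sum>m\<in>-{j}. cutfd r (y$m) * u$m * (\<Prod>l\<in>-{j}-{m}. cutf r (y$l)))) (at y)"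
    by (intro has_derivative_prod cut_chain bounded_linear_imp_has_derivative bounded_linear_vec_nth)
  then show ?thesis unfolding theta_def[abs_def] thetad_def[abs_def] .
qed

lemma psi_deriv:
  assumes A: "linear A"
  shows "(psi j r r' c \<tau> A has_derivative Dpsi j r r' c \<tau> A x) (at x)"
proof -
  have bA: "bounded_linear A" using A linear_conv_bounded_linear by blast
  have dA: "(A has_derivative A) (at x)" by (rule bounded_linear_imp_has_derivative[OF bA])
  have d1: "((\<lambda>x. theta j r (A x)) has_derivative (\<lambda>v. thetad j r (A x) (A v))) (at x)"
    by (rule has_derivative_compose[OF dA theta_deriv])
  have bl: "bounded_linear (\<lambda>x. A x $ j / \<tau>)"
    by (intro bounded_linear_compose[OF bounded_linear_divide] bounded_linear_compose[OF bounded_linear_vec_nth bA])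
  have d2: "((\<lambda>x. \<tau> * c * eta r' (A x $ j / \<tau>)) has_derivative
      (\<lambda>v. \<tau> * c * (etad r' (A x $ j / \<tau>) * (A v $ j / \<tau>)))) (at x)"
    by (intro has_derivative_mult_right eta_chain bounded_linear_imp_has_derivative[OF bl])
  have "((\<lambda>x. theta j r (A x) * (\<tau> * c * eta r' (A x $ j / \<tau>))) has_derivative
     (\<lambda>v. theta j r (A x) * (\<tau> * c * (etad r' (A x $ j / \<tau>) * (A v $ j / \<tau>)))
         + thetad j r (A x) (A v) * (\<tau> * c * eta r' (A x $ j / \<tau>)))) (at x)"
    by (rule has_derivative_mult[OF d1 d2])
  then show ?thesis unfolding psi_def[abs_def] Dpsi_def[abs_def] .
qed

lemma cut_cont: assumes "0 < r" "r < 1" shows "continuous_on S (cutf r)"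
  unfolding cutf_def[abs_def] pp_def using kap_pos[OF assms] by (intro continuous_intros) auto

lemma cut_cont': assumes "0 < r" "r < 1" "continuous_on S f" shows "continuous_on S (\<lambda>x. cutf r (f x))"
  using continuous_on_compose2[OF cut_cont[OF assms(1,2), of UNIV] assms(3)] by auto
lemma cutd_cont': assumes "0 < r" "r < 1" "continuous_on S f" shows "continuous_on S (\<lambda>x. cutfd r (f x))"
  using continuous_on_compose2[OF cutd_cont[OF assms(1,2), of UNIV] assms(3)] by auto

lemma Dpsi_cont:
  assumes A: "linear A" and r: "0 < r" "r < 1" and r': "0 < r'" "r' < 1" and t: "\<tau> \<noteq> 0"
  shows "continuous_on UNIV (\<lambda>x. Dpsi j r r' c \<tau> A x v)"
proof -
  have bA: "bounded_linear A" using A linear_conv_bounded_linear by blast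
  have cA: "continuous_on UNIV A" by (rule linear_continuous_on[OF bA])
  have cc: "continuous_on UNIV (\<lambda>x. A x $ m)" for m
    by (intro continuous_on_compose2[OF linear_continuous_on[OF bounded_linear_vec_nth] cA]) auto
  have ccj: "continuous_on UNIV (\<lambda>x. A x $ j / \<tau>)" using t by (intro continuous_intros cc) auto
  have ct: "continuous_on UNIV (\<lambda>x. theta j r (A x))"
    unfolding theta_def by (rule continuous_on_prod, rule cut_cont'[OF r cc])
  have ctd: "continuous_on UNIV (\<lambda>x. thetad j r (A x) (A v))"
    unfolding thetad_def
    apply (rule continuous_on_sum)
    apply (rule continuous_on_mult)
     apply (rule continuous_on_mult)
      apply (rule cutd_cont'[OF r cc])
     apply (rule continuous_on_const)
    apply (rule continuous_on_prod, rule cut_cont'[OF r cc])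
    done
  have ce: "continuous_on UNIV (\<lambda>x. eta r' (A x $ j / \<tau>))"
    unfolding eta_def by (rule continuous_on_mult[OF ccj cut_cont'[OF r' ccj]])
  have ced: "continuous_on UNIV (\<lambda>x. etad r' (A x $ j / \<tau>))"
    unfolding etad_def by (rule continuous_on_add[OF cut_cont'[OF r' ccj] continuous_on_mult[OF ccj cutd_cont'[OF r' ccj]]])
  show ?thesis
    unfolding Dpsi_def
    apply (rule continuous_on_add)
     apply (rule continuous_on_mult[OF ct])
     apply (rule continuous_on_mult[OF continuous_on_const])
     apply (rule continuous_on_mult[OF ced continuous_on_const])
    apply (rule continuous_on_mult[OF ctd])
    apply (rule continuous_on_mult[OF continuous_on_const ce])
    done
qed

lemma theta_range: assumes "0 < r" "r < 1" shows "0 \<le> theta j r y" "theta j r y \<le> 1"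
  unfolding theta_def using cut_range[OF assms] by (auto intro: prod_nonneg prod_le_1)

lemma thetad_bound: fixes y u :: "real^'n::finite" assumes "0 < r" "r < 1" "\<forall>u. \<bar>cutfd r u\<bar> \<le> B"
  shows "\<bar>thetad j r y u\<bar> \<le> real CARD('n) * B * norm u"
proof -
  have B0: "0 \<le> B" using assms(3) by (meson abs_ge_zero order_trans)
  have t: "\<bar>cutfd r (y$m) * u$m * (\<Prod>l\<in>-{j}-{m}. cutf r (y$l))\<bar> \<le> B * norm u" for m :: 'n
  proof -
    have p0: "0 \<le> (\<Prod>l\<in>-{j}-{m}. cutf r (y$l))"
      by (rule prod_nonneg) (use cut_range[OF assms(1,2)] in auto)
    have p1: "(\<Prod>l\<in>-{j}-{m}. cutf r (y$l)) \<le> 1"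
      by (rule prod_le_1) (use cut_range[OF assms(1,2)] in auto)
    have p: "\<bar>\<Prod>l\<in>-{j}-{m}. cutf r (y$l)\<bar> \<le> 1" using p0 p1 by simp
    have "\<bar>cutfd r (y$m) * u$m\<bar> \<le> B * norm u"
      unfolding abs_mult using assms(3) component_le_norm_cart B0 by (intro mult_mono) auto
    then have "\<bar>cutfd r (y$m) * u$m\<bar> * \<bar>\<Prod>l\<in>-{j}-{m}. cutf r (y$l)\<bar> \<le> B * norm u * 1"
      using p B0 by (intro mult_mono) auto
    then show ?thesis by (simp add: abs_mult)
  qed
  have "\<bar>thetad j r y u\<bar> \<le> (\<Sum>m\<in>-{j}. \<bar>cutfd r (y$m) * u$m * (\<Prod>l\<in>-{j}-{m}. cutf r (y$l))\<bar>)"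
    unfolding thetad_def by (rule sum_abs)
  also have "\<dots> \<le> real (card (-{j} :: 'n set)) * (B * norm u)"
    by (rule sum_bounded_above) (rule t)
  also have "\<dots> \<le> real CARD('n) * (B * norm u)"
    using B0 by (intro mult_right_mono) (auto intro: card_mono)
  finally show ?thesis by (simp add: mult.assoc)
qed

lemma row_j: fixes A :: "real^'n::finite \<Rightarrow> real^'m::finite" assumes "linear A" shows "A v $ j = inner (matrix A $ j) v"
proof -
  have "A v = matrix A *v v" using matrix_vector_mul(2)[OF assms] by metis
  then show ?thesis by (simp add: matrix_mult_dot)
qed

lemma Dpsi_bound:
  fixes A :: "real^'n::finite \<Rightarrow> real^'n"
  assumes A: "linear A" and r: "0 < r" "r < 1" and r': "0 < r'" "r' < 1" and t: "\<tau> > 0" and c: "c \<ge> 0"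
    and B: "\<forall>u. \<bar>cutfd r u\<bar> \<le> B" and B': "\<forall>u. \<bar>cutfd r' u\<bar> \<le> B'"
  shows "\<bar>Dpsi j r r' c \<tau> A x v\<bar> \<le> (c * (1 + B') * norm (matrix A $ j) + \<tau> * c * (real CARD('n) * B * onorm A)) * norm v"
proof -
  have bA: "bounded_linear A" using A linear_conv_bounded_linear by blast
  have B0: "0 \<le> B" using B by (meson abs_ge_zero order_trans)
  have th0: "0 \<le> theta j r (A x)" "theta j r (A x) \<le> 1" using theta_range[OF r(1) r(2)] by blast+
  have th: "\<bar>theta j r (A x)\<bar> \<le> 1" using th0 by simp
  have e1: "\<bar>eta r' u\<bar> \<le> 1" for u using eta_bounds[OF r' B'] by (simp add: eta_def)
  have e2: "\<bar>etad r' u\<bar> \<le> 1 + B'" for u using eta_bounds[OF r' B'] by (simp add: etad_def)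
  have B'0: "0 \<le> 1 + B'" using e2[of 0] abs_ge_zero[of "etad r' 0"] by linarith
  have Avj: "\<bar>A v $ j\<bar> \<le> norm (matrix A $ j) * norm v"
    unfolding row_j[OF A] by (rule Cauchy_Schwarz_ineq2)
  have term1: "\<bar>theta j r (A x) * (\<tau> * c * (etad r' (A x $ j / \<tau>) * (A v $ j / \<tau>)))\<bar>
      \<le> c * (1 + B') * norm (matrix A $ j) * norm v"
  proof -
    have "\<bar>theta j r (A x) * (\<tau> * c * (etad r' (A x $ j / \<tau>) * (A v $ j / \<tau>)))\<bar>
       = \<bar>theta j r (A x)\<bar> * (c * (\<bar>etad r' (A x $ j / \<tau>)\<bar> * \<bar>A v $ j\<bar>))"
      using t c by (simp add: abs_mult)
    also have "\<dots> \<le> 1 * (c * ((1 + B') * (norm (matrix A $ j) * norm v)))"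
      using th e2 Avj c B'0 by (intro mult_mono) auto
    finally show ?thesis by (simp add: mult.assoc)
  qed
  have term2: "\<bar>thetad j r (A x) (A v) * (\<tau> * c * eta r' (A x $ j / \<tau>))\<bar>
      \<le> \<tau> * c * (real CARD('n) * B * onorm A) * norm v"
  proof -
    have "\<bar>thetad j r (A x) (A v)\<bar> \<le> real CARD('n) * B * norm (A v)" by (rule thetad_bound[OF r B])
    also have "\<dots> \<le> real CARD('n) * B * (onorm A * norm v)"
      using onorm[OF bA, of v] B0 by (intro mult_left_mono) auto
    finally have a: "\<bar>thetad j r (A x) (A v)\<bar> \<le> real CARD('n) * B * (onorm A * norm v)" .
    have b: "\<bar>\<tau> * c * eta r' (A x $ j / \<tau>)\<bar> \<le> \<tau> * c"
      using e1[of "A x $ j / \<tau>"] t c by (simp add: abs_mult) (metis mult_le_cancel_left1 mult_left_le mult_nonneg_nonneg order_less_imp_le)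
    have "\<bar>thetad j r (A x) (A v) * (\<tau> * c * eta r' (A x $ j / \<tau>))\<bar> \<le> real CARD('n) * B * (onorm A * norm v) * (\<tau> * c)"
      unfolding abs_mult[of "thetad j r (A x) (A v)"] using a b by (intro mult_mono) auto
    then show ?thesis by (simp add: algebra_simps)
  qed
  have "\<bar>Dpsi j r r' c \<tau> A x v\<bar> \<le> c * (1 + B') * norm (matrix A $ j) * norm v + \<tau> * c * (real CARD('n) * B * onorm A) * norm v"
    unfolding Dpsi_def using term1 term2 abs_triangle_ineq order_trans add_mono by fastforce
  then show ?thesis by (simp add: algebra_simps)
qed



fun Acomp :: "(nat \<Rightarrow> 'a \<Rightarrow> 'a) \<Rightarrow> nat \<Rightarrow> 'a \<Rightarrow> 'a" where
  "Acomp L 0 = id"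
| "Acomp L (Suc i) = Acomp L i \<circ> L (Suc i)"

definition wv :: "'n::finite \<Rightarrow> (real^'n \<Rightarrow> real^'n) \<Rightarrow> real^'n" where
  "wv j A = (1 / (norm (matrix A $ j))^2) *\<^sub>R (matrix A $ j)"

definition Hmap :: "'n::finite \<Rightarrow> real \<Rightarrow> real \<Rightarrow> real \<Rightarrow> real \<Rightarrow> (real^'n \<Rightarrow> real^'n) \<Rightarrow> real^'n \<Rightarrow> real^'n" where
  "Hmap j r r' c \<tau> A = (\<lambda>x. x - psi j r r' c \<tau> A x *\<^sub>R wv j A)"

lemma iter_pre_Acomp: "x \<in> iter_pre L S i \<longleftrightarrow> Acomp L i x \<in> S"
  by (induction i arbitrary: x) auto

lemma Acomp_cong: "(\<forall>m\<in>{1..i}. L m = L' m) \<Longrightarrow> Acomp L i = Acomp L' i"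
  by (induction i) auto

lemma Acomp_lin: "(\<forall>m\<in>{1..i}. linear (L m) \<and> bij (L m)) \<Longrightarrow> linear (Acomp L i) \<and> bij (Acomp L i)"
proof (induction i)
  case 0
  have "linear (\<lambda>x::'a. x)" by (rule linearI) auto
  then show ?case using bij_id[unfolded id_def] by (simp add: id_def)
next
  case (Suc i)
  then have "linear (Acomp L i) \<and> bij (Acomp L i)" by auto
  moreover have "linear (L (Suc i)) \<and> bij (L (Suc i))" using Suc.prems by auto
  ultimately have "linear (Acomp L i \<circ> L (Suc i)) \<and> bij (Acomp L i \<circ> L (Suc i))"
    using linear_compose[of "L (Suc i)" "Acomp L i"] bij_comp[of "L (Suc i)" "Acomp L i"] by blast
  then show ?case by (simp only: Acomp.simps)
qed

lemma avec_nz: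
  fixes A :: "real^'n::finite \<Rightarrow> real^'n"
  assumes "linear A" "bij A" shows "matrix A $ j \<noteq> 0"
proof
  assume z: "matrix A $ j = 0"
  obtain v where "A v = axis j 1" using assms(2) by (metis bij_def surjD)
  then have "A v $ j = 1" by simp
  moreover have "A v $ j = 0" using row_j[OF assms(1)] z by simp
  ultimately show False by simp
qed

lemma Aw_j:
  fixes A :: "real^'n::finite \<Rightarrow> real^'n"
  assumes "linear A" "bij A" shows "A (wv j A) $ j = 1"
proof -
  have nz: "norm (matrix A $ j) \<noteq> 0" using avec_nz[OF assms] by simp
  have "A (wv j A) $ j = inner (matrix A $ j) (wv j A)" by (rule row_j[OF assms(1)])
  also have "\<dots> = (1 / (norm (matrix A $ j))^2) * inner (matrix A $ j) (matrix A $ j)"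
    by (simp add: wv_def)
  also have "\<dots> = 1" using nz by (simp add: power2_norm_eq_inner[symmetric])
  finally show ?thesis .
qed

lemma norm_wv:
  fixes A :: "real^'n::finite \<Rightarrow> real^'n"
  assumes "linear A" "bij A" shows "norm (wv j A) = 1 / norm (matrix A $ j)"
proof -
  have nz: "norm (matrix A $ j) \<noteq> 0" using avec_nz[OF assms] by simp
  show ?thesis using nz by (simp add: wv_def power2_eq_square)
qed

lemma Aw_m:
  fixes A :: "real^'n::finite \<Rightarrow> real^'n"
  assumes "linear A" "bij A" shows "\<bar>A (wv j A) $ m\<bar> \<le> onorm A / norm (matrix A $ j)"
proof -
  have bA: "bounded_linear A" using assms(1) linear_conv_bounded_linear by blast
  have "\<bar>A (wv j A) $ m\<bar> \<le> norm (A (wv j A))" by (rule component_le_norm_cart)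
  also have "\<dots> \<le> onorm A * norm (wv j A)" by (rule onorm[OF bA])
  finally show ?thesis using norm_wv[OF assms] by simp
qed

lemma psi_inner:
  fixes A :: "real^'n::finite \<Rightarrow> real^'n"
  assumes r: "0 < r" "r < 1" and r': "0 < r'" "r' < 1" and t: "\<tau> > 0"
    and y1: "\<forall>m. m \<noteq> j \<longrightarrow> \<bar>A x $ m\<bar> \<le> r" and y2: "\<bar>A x $ j\<bar> \<le> r' * \<tau>"
  shows "psi j r r' c \<tau> A x = c * A x $ j"
proof -
  have th: "theta j r (A x) = 1" unfolding theta_def
    by (rule prod.neutral) (use y1 cut_one[OF r] in auto)
  have "\<bar>A x $ j / \<tau>\<bar> \<le> r'" using y2 t by (simp add: divide_le_eq abs_divide)
  then have "cutf r' (A x $ j / \<tau>) = 1" by (rule cut_one[OF r'])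
  then show ?thesis using t by (simp add: psi_def th eta_def)
qed

lemma psi_outer:
  fixes A :: "real^'n::finite \<Rightarrow> real^'n"
  assumes r: "0 < r" "r < 1" and r': "0 < r'" "r' < 1" and t: "\<tau> > 0"
    and out: "A x \<notin> jbox j 1 \<tau>"
  shows "psi j r r' c \<tau> A x = 0"
proof -
  from out have "(\<exists>m. m \<noteq> j \<and> \<bar>A x $ m\<bar> > 1) \<or> \<bar>A x $ j\<bar> > \<tau>"
    unfolding jbox_def by auto
  then show ?thesis
  proof
    assume "\<exists>m. m \<noteq> j \<and> \<bar>A x $ m\<bar> > 1"
    then obtain m where m: "m \<noteq> j" "\<bar>A x $ m\<bar> > 1" by auto
    have "cutf r (A x $ m) = 0" using m by (intro cut_zero[OF r]) auto
    then have "theta j r (A x) = 0" unfolding theta_def using m(1)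
      by (intro prod_zero) auto
    then show ?thesis by (simp add: psi_def)
  next
    assume "\<bar>A x $ j\<bar> > \<tau>"
    then have "\<bar>A x $ j / \<tau>\<bar> \<ge> 1" using t by (simp add: abs_divide le_divide_eq)
    then have "cutf r' (A x $ j / \<tau>) = 0" by (rule cut_zero[OF r'])
    then show ?thesis by (simp add: psi_def eta_def)
  qed
qed

lemma Hmap_step:
  fixes A :: "real^'n::finite \<Rightarrow> real^'n"
  assumes A: "linear A" and r: "0 < r" "r < 1" and r': "0 < r'" "r' < 1" and t: "\<tau> > 0"
    and y1: "\<forall>m. m \<noteq> j \<longrightarrow> \<bar>A x $ m\<bar> \<le> r" and y2: "\<bar>A x $ j\<bar> \<le> r' * \<tau>"
  shows "A (Hmap j r r' c \<tau> A x) = A x - (c * A x $ j) *\<^sub>R A (wv j A)"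
proof -
  have p: "psi j r r' c \<tau> A x = c * A x $ j" by (rule psi_inner) (use r r' t y1 y2 in auto)
  show ?thesis using p by (simp add: Hmap_def linear_diff[OF A] linear_scale[OF A])
qed

lemma chain_lemma:
  fixes L :: "nat \<Rightarrow> real^'n::finite \<Rightarrow> real^'n" and H :: "nat \<Rightarrow> real^'n \<Rightarrow> real^'n"
  assumes step: "\<And>i x. i \<in> {1..n} \<Longrightarrow> (\<forall>m. m \<noteq> j \<longrightarrow> \<bar>Acomp L i x $ m\<bar> \<le> r) \<Longrightarrow> \<bar>Acomp L i x $ j\<bar> \<le> s0 \<Longrightarrow>
        Acomp L i (H i x) = Acomp L i x - (c * (Acomp L i x $ j)) *\<^sub>R u i"
   and um: "\<And>i m. i \<in> {1..n} \<Longrightarrow> m \<noteq> j \<Longrightarrow> \<bar>u i $ m\<bar> \<le> M"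
   and uj: "\<And>i. i \<in> {1..n} \<Longrightarrow> u i $ j = 1"
   and c: "0 \<le> c" "c \<le> 1" and M: "0 \<le> M" and s0: "0 \<le> s0"
  shows "1 \<le> a \<Longrightarrow> a + m - 1 \<le> n \<Longrightarrow> (\<forall>l. l \<noteq> j \<longrightarrow> \<bar>Acomp L (a + m - 1) x $ l\<bar> \<le> \<rho>) \<Longrightarrow>
     \<rho> + m * c * s0 * M \<le> r \<Longrightarrow> \<bar>Acomp L (a + m - 1) x $ j\<bar> \<le> s \<Longrightarrow> s \<le> s0 \<Longrightarrow>
     (\<forall>l. l \<noteq> j \<longrightarrow> \<bar>Acomp L (a - 1) (chain L H a m x) $ l\<bar> \<le> \<rho> + m * c * s0 * M) \<and>
     \<bar>Acomp L (a - 1) (chain L H a m x) $ j\<bar> \<le> (1 - c)^m * s"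
proof (induction m arbitrary: x \<rho> s)
  case 0
  then show ?case by simp
next
  case (Suc m)
  define y where "y = Acomp L (a + m) x"
  define x1 where "x1 = L (a + m) (H (a + m) x)"
  have am: "a + Suc m - 1 = a + m" by simp
  have am1: "a + m = Suc (a + m - 1)" using Suc.prems(1) by simp
  have i: "a + m \<in> {1..n}" using Suc.prems(1,2) by simp
  have cs: "0 \<le> c * s0 * M" using c M s0 by simp
  have rho_r: "\<rho> \<le> r"
    using Suc.prems(4) cs by (smt (verit) mult_nonneg_nonneg of_nat_0_le_iff mult.assoc)
  have yl: "\<forall>l. l \<noteq> j \<longrightarrow> \<bar>y $ l\<bar> \<le> \<rho>" using Suc.prems(3) by (simp add: y_def)
  have yj: "\<bar>y $ j\<bar> \<le> s" using Suc.prems(5) by (simp add: y_def)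
  have s_nn: "0 \<le> s" using yj by (meson abs_ge_zero order_trans)
  have x1eq: "Acomp L (a + m - 1) x1 = y - (c * y $ j) *\<^sub>R u (a + m)"
  proof -
    have "Acomp L (a + m - 1) x1 = Acomp L (a + m) (H (a + m) x)"
    proof -
      have "Acomp L (Suc (a + m - 1)) = Acomp L (a + m - 1) \<circ> L (Suc (a + m - 1))" by simp
      then have "Acomp L (a + m) = Acomp L (a + m - 1) \<circ> L (a + m)" using am1 by metis
      then show ?thesis unfolding x1_def by simp
    qed
    also have "\<dots> = y - (c * y $ j) *\<^sub>R u (a + m)"
      unfolding y_def by (rule step[OF i]) (use yl rho_r yj Suc.prems(6) in \<open>auto simp: y_def intro: order_trans\<close>)
    finally show ?thesis .
  qed
  have n1: "\<forall>l. l \<noteq> j \<longrightarrow> \<bar>Acomp L (a + m - 1) x1 $ l\<bar> \<le> \<rho> + c * s0 * M"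
  proof (intro allI impI)
    fix l assume l: "l \<noteq> j"
    have "\<bar>c * y $ j * u (a + m) $ l\<bar> = c * (\<bar>y $ j\<bar> * \<bar>u (a + m) $ l\<bar>)" using c by (simp add: abs_mult)
    also have "\<dots> \<le> c * (s0 * M)"
      using yj Suc.prems(6) um[OF i l] c s0 by (intro mult_left_mono mult_mono) auto
    finally have "\<bar>c * y $ j * u (a + m) $ l\<bar> \<le> c * s0 * M" by (simp add: mult.assoc)
    then show "\<bar>Acomp L (a + m - 1) x1 $ l\<bar> \<le> \<rho> + c * s0 * M"
      using yl l unfolding x1eq by simp (smt (verit))
  qed
  have n2: "\<bar>Acomp L (a + m - 1) x1 $ j\<bar> \<le> (1 - c) * s"
  proof -
    have "Acomp L (a + m - 1) x1 $ j = (1 - c) * y $ j" unfolding x1eq using uj[OF i] by (simp add: algebra_simps)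
    then show ?thesis using yj c by (simp add: abs_mult mult_left_mono)
  qed
  have IH: "(\<forall>l. l \<noteq> j \<longrightarrow> \<bar>Acomp L (a - 1) (chain L H a m x1) $ l\<bar> \<le> (\<rho> + c * s0 * M) + m * c * s0 * M) \<and>
     \<bar>Acomp L (a - 1) (chain L H a m x1) $ j\<bar> \<le> (1 - c)^m * ((1 - c) * s)"
  proof (rule Suc.IH)
    show "1 \<le> a" by (rule Suc.prems(1))
    show "a + m - 1 \<le> n" using Suc.prems(2) by simp
    show "\<forall>l. l \<noteq> j \<longrightarrow> \<bar>Acomp L (a + m - 1) x1 $ l\<bar> \<le> \<rho> + c * s0 * M" by (rule n1)
    show "\<rho> + c * s0 * M + real m * c * s0 * M \<le> r" using Suc.prems(4) by (simp add: algebra_simps)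
    show "\<bar>Acomp L (a + m - 1) x1 $ j\<bar> \<le> (1 - c) * s" by (rule n2)
    show "(1 - c) * s \<le> s0" using c s_nn Suc.prems(6) by (smt (verit) mult_left_le_one_le)
  qed
  have ch: "chain L H a (Suc m) x = chain L H a m x1" by (simp add: x1_def)
  show ?case unfolding ch using IH by (simp add: algebra_simps)
qed

lemma deriv_close_mono: "deriv_close e f \<Longrightarrow> e \<le> e' \<Longrightarrow> deriv_close e' f"
  unfolding deriv_close_def by (meson order_trans)



theorem lemma3:
  fixes j :: "'n::finite" and \<epsilon> \<delta> :: real
  assumes "\<epsilon> > 0" and "0 < \<delta>" and "\<delta> < 1"
  shows "\<exists>k::nat. \<exists>Hc :: real \<Rightarrow> (nat \<Rightarrow> real^'n \<Rightarrow> real^'n) \<Rightarrow> nat \<Rightarrow> real^'n \<Rightarrow> real^'n.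
    (\<forall>\<tau> L L' i. (\<forall>m\<in>{1..i}. L m = L' m) \<longrightarrow> Hc \<tau> L i = Hc \<tau> L' i) \<and>
    (\<forall>n L. n \<ge> k \<and> (\<forall>i\<in>{1..n}. linear (L i) \<and> bij (L i)) \<longrightarrow>
      (\<exists>\<tau>0>0. \<forall>\<tau>. 0 < \<tau> \<and> \<tau> < \<tau>0 \<longrightarrow>
         (\<forall>i\<in>{1..n}. C1_diffeo (Hc \<tau> L i) \<and> deriv_close \<epsilon> (Hc \<tau> L i) \<and>
             (\<forall>x. x \<notin> iter_pre L (jbox j 1 \<tau>) i \<longrightarrow> Hc \<tau> L i x = x)) \<and>
         (\<forall>i. k \<le> i \<and> i \<le> n \<longrightarrow>
             chain L (Hc \<tau> L) (i - k + 1) k ` iter_pre L (jbox j (1 - \<delta>) ((1 - \<delta>) * \<tau>)) i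
               \<subseteq> iter_pre L (jbox j 1 (\<delta> * \<tau>)) (i - k))))"
proof -
  note eps = assms(1) and del = assms(2,3)
  define r where "r = 1 - \<delta> / 2"
  define r' where "r' = 1 - \<delta>"
  have r: "0 < r" "r < 1" using del by (auto simp: r_def)
  have r': "0 < r'" "r' < 1" using del by (auto simp: r'_def)
  obtain B where B0: "B \<ge> 0" and B: "\<forall>u. \<bar>cutfd r u\<bar> \<le> B" using cutd_bound[OF r] by blast
  obtain B' where B'0: "B' \<ge> 0" and B': "\<forall>u. \<bar>cutfd r' u\<bar> \<le> B'" using cutd_bound[OF r'] by blast
  define e0 where "e0 = min \<epsilon> (1/2)"
  have e0: "0 < e0" "e0 \<le> \<epsilon>" "e0 \<le> 1/2" using eps by (auto simp: e0_def)
  define c where "c = min (1/2) (e0 / (2 * (1 + B')))"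
  have c: "0 < c" "c \<le> 1/2" using e0 B'0 by (auto simp: c_def)
  have cB': "c * (1 + B') \<le> e0 / 2"
  proof -
    have "c \<le> e0 / (2 * (1 + B'))" by (simp add: c_def)
    then have "c * (1 + B') \<le> e0 / (2 * (1 + B')) * (1 + B')" using B'0 by (intro mult_right_mono) auto
    also have "\<dots> = e0 / 2" using B'0 by (simp add: field_simps)
    finally show ?thesis .
  qed
  obtain k where k: "(1 - c)^k < \<delta>" using real_arch_pow_inv[of \<delta> "1 - c"] del c by auto
  define Hc :: "real \<Rightarrow> (nat \<Rightarrow> real^'n \<Rightarrow> real^'n) \<Rightarrow> nat \<Rightarrow> real^'n \<Rightarrow> real^'n"
    where "Hc = (\<lambda>\<tau> L i. Hmap j r r' c \<tau> (Acomp L i))"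
  show ?thesis
  proof (intro exI[of _ k] exI[of _ Hc] conjI allI impI)
    fix \<tau> L L' i assume "\<forall>m\<in>{1..i}. (L :: nat \<Rightarrow> real^'n \<Rightarrow> real^'n) m = L' m"
    then show "Hc \<tau> L i = Hc \<tau> L' i" unfolding Hc_def using Acomp_cong by metis
  next
    fix n and L :: "nat \<Rightarrow> real^'n \<Rightarrow> real^'n"
    assume hyp: "k \<le> n \<and> (\<forall>i\<in>{1..n}. linear (L i) \<and> bij (L i))"
    have AL: "linear (Acomp L i) \<and> bij (Acomp L i)" if "i \<in> {1..n}" for i
      by (rule Acomp_lin) (use hyp that in auto)
    define Mi where "Mi i = onorm (Acomp L i) / norm (matrix (Acomp L i) $ j)" for i
    define M where "M = 1 + (\<Sum>i\<in>{1..n}. Mi i)"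
    have Mi0: "0 \<le> Mi i" if "i \<in> {1..n}" for i
    proof -
      have "bounded_linear (Acomp L i)" using AL[OF that] linear_conv_bounded_linear by blast
      then show ?thesis unfolding Mi_def by (intro divide_nonneg_nonneg onorm_pos_le) auto
    qed
    have MiM: "Mi i \<le> M" if "i \<in> {1..n}" for i
    proof -
      have "Mi i \<le> (\<Sum>i\<in>{1..n}. Mi i)" by (rule member_le_sum) (use Mi0 that in auto)
      then show ?thesis by (simp add: M_def)
    qed
    have "0 \<le> (\<Sum>i\<in>{1..n}. Mi i)" by (rule sum_nonneg) (use Mi0 in auto)
    then have M0: "0 \<le> M" unfolding M_def by simp
    define C0 where "C0 = real CARD('n) * B * c * M"
    have C0: "0 \<le> C0" unfolding C0_def using B0 c M0 by simp
    define \<tau>0 where "\<tau>0 = min (e0 / 4 / (C0 + 1)) (\<delta> / 2 / (real k * c * M + 1))"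
    have kcM: "0 \<le> real k * c * M" using c M0 by simp
      have tC0: "\<tau> * C0 \<le> e0 / 4" if t: "0 < \<tau> \<and> \<tau> < \<tau>0" for \<tau>
      proof -
        have "\<tau> * C0 \<le> \<tau> * (C0 + 1)" using t by simp
        also have "\<dots> \<le> (e0 / 4 / (C0 + 1)) * (C0 + 1)"
          using t C0 by (intro mult_right_mono) (auto simp: \<tau>0_def)
        also have "\<dots> = e0 / 4"
        proof -
          have h: "C0 + 1 \<noteq> 0" using C0 by linarith
          show ?thesis by (simp only: divide_inverse mult.assoc left_inverse[OF h] mult_1_right)
        qed
        finally show ?thesis .
      qed
      have tkcM: "\<tau> * (real k * c * M) \<le> \<delta> / 2" if t: "0 < \<tau> \<and> \<tau> < \<tau>0" for \<tau>
      proof -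
        have "\<tau> * (real k * c * M) \<le> \<tau> * (real k * c * M + 1)" using t by simp
        also have "\<dots> \<le> (\<delta> / 2 / (real k * c * M + 1)) * (real k * c * M + 1)"
          using t kcM by (intro mult_right_mono) (auto simp: \<tau>0_def)
        also have "\<dots> = \<delta> / 2"
        proof -
          have h: "real k * (c * M) + 1 \<noteq> 0" using kcM by linarith
          show ?thesis by (simp only: divide_inverse mult.assoc left_inverse[OF h] mult_1_right)
        qed
        finally show ?thesis .
      qed
    show "\<exists>\<tau>0>0. \<forall>\<tau>. 0 < \<tau> \<and> \<tau> < \<tau>0 \<longrightarrow>
         (\<forall>i\<in>{1..n}. C1_diffeo (Hc \<tau> L i) \<and> deriv_close \<epsilon> (Hc \<tau> L i) \<and>
             (\<forall>x. x \<notin> iter_pre L (jbox j 1 \<tau>) i \<longrightarrow> Hc \<tau> L i x = x)) \<and>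
         (\<forall>i. k \<le> i \<and> i \<le> n \<longrightarrow>
             chain L (Hc \<tau> L) (i - k + 1) k ` iter_pre L (jbox j (1 - \<delta>) ((1 - \<delta>) * \<tau>)) i
               \<subseteq> iter_pre L (jbox j 1 (\<delta> * \<tau>)) (i - k))"
    proof (intro exI[of _ \<tau>0] conjI allI impI)
      show "0 < \<tau>0" unfolding \<tau>0_def using e0 C0 del kcM by auto
    next
      fix \<tau> assume t: "0 < \<tau> \<and> \<tau> < \<tau>0"
      {
        fix i assume i: "i \<in> {1..n}"
        define A where "A = Acomp L i"
        have A: "linear A" "bij A" using AL[OF i] by (auto simp: A_def)
        have nz: "norm (matrix A $ j) > 0" using avec_nz[OF A] by simp
        define q0 where "q0 = c * (1 + B') * norm (matrix A $ j) + \<tau> * c * (real CARD('n) * B * onorm A)"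
        have HcA: "Hc \<tau> L i = (\<lambda>x. x - psi j r r' c \<tau> A x *\<^sub>R wv j A)"
          by (simp add: Hc_def Hmap_def A_def)
        have qw: "q0 * norm (wv j A) = c * (1 + B') + \<tau> * (real CARD('n) * B * c * Mi i)"
          unfolding q0_def norm_wv[OF A] Mi_def A_def[symmetric] using nz by (simp add: field_simps)
        have "\<tau> * (real CARD('n) * B * c * Mi i) \<le> \<tau> * C0"
          unfolding C0_def using t B0 c MiM[OF i] by (intro mult_left_mono) (auto intro!: mult_left_mono)
        then have qw': "q0 * norm (wv j A) \<le> 3/4 * e0" using qw cB' tC0[OF t] by linarith
        have sd: "C1_diffeo (\<lambda>x. x - psi j r r' c \<tau> A x *\<^sub>R wv j A) \<and> deriv_close (q0 * norm (wv j A)) (\<lambda>x. x - psi j r r' c \<tau> A x *\<^sub>R wv j A)"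
        proof (rule shear_diffeo)
          show "(psi j r r' c \<tau> A has_derivative Dpsi j r r' c \<tau> A x) (at x)" for x by (rule psi_deriv[OF A(1)])
          show "continuous_on UNIV (\<lambda>x. Dpsi j r r' c \<tau> A x v)" for v
            by (rule Dpsi_cont[OF A(1) r r']) (use t in auto)
          show "\<bar>Dpsi j r r' c \<tau> A x v\<bar> \<le> q0 * norm v" for x v
            unfolding q0_def by (rule Dpsi_bound[OF A(1) r r' _ _ B B']) (use t c in auto)
          show "q0 * norm (wv j A) < 1" using qw' e0 by linarith
        qed
        have "C1_diffeo (Hc \<tau> L i)" using sd HcA by simp
        moreover have "deriv_close \<epsilon> (Hc \<tau> L i)"
          using sd HcA deriv_close_mono[of "q0 * norm (wv j A)" _ \<epsilon>] qw' e0 by auto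
        moreover have "\<forall>x. x \<notin> iter_pre L (jbox j 1 \<tau>) i \<longrightarrow> Hc \<tau> L i x = x"
        proof (intro allI impI)
          fix x assume "x \<notin> iter_pre L (jbox j 1 \<tau>) i"
          then have out: "A x \<notin> jbox j 1 \<tau>" by (simp add: iter_pre_Acomp A_def)
          have tt: "\<tau> > 0" using t by simp
          have "psi j r r' c \<tau> A x = 0" by (rule psi_outer) (use r r' tt out in auto)
          then show "Hc \<tau> L i x = x" using HcA by simp
        qed
        ultimately have "C1_diffeo (Hc \<tau> L i) \<and> deriv_close \<epsilon> (Hc \<tau> L i) \<and>
             (\<forall>x. x \<notin> iter_pre L (jbox j 1 \<tau>) i \<longrightarrow> Hc \<tau> L i x = x)" by blast
      }
      note part1 = this
      show "\<forall>i\<in>{1..n}. C1_diffeo (Hc \<tau> L i) \<and> deriv_close \<epsilon> (Hc \<tau> L i) \<and>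
        (\<forall>x. x \<notin> iter_pre L (jbox j 1 \<tau>) i \<longrightarrow> Hc \<tau> L i x = x)" using part1 by blast
    next
      fix \<tau> i assume t: "0 < \<tau> \<and> \<tau> < \<tau>0" and ik: "k \<le> i \<and> i \<le> n"
      show "chain L (Hc \<tau> L) (i - k + 1) k ` iter_pre L (jbox j (1 - \<delta>) ((1 - \<delta>) * \<tau>)) i
               \<subseteq> iter_pre L (jbox j 1 (\<delta> * \<tau>)) (i - k)"
      proof
        fix z assume "z \<in> chain L (Hc \<tau> L) (i - k + 1) k ` iter_pre L (jbox j (1 - \<delta>) ((1 - \<delta>) * \<tau>)) i"
        then obtain x where x: "x \<in> iter_pre L (jbox j (1 - \<delta>) ((1 - \<delta>) * \<tau>)) i"
          and z: "z = chain L (Hc \<tau> L) (i - k + 1) k x" by blast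
        have xb: "Acomp L i x \<in> jbox j (1 - \<delta>) ((1 - \<delta>) * \<tau>)" using x by (simp add: iter_pre_Acomp)
        define u where "u i = Acomp L i (wv j (Acomp L i))" for i
        have s0: "0 \<le> r' * \<tau>" using r' t by simp
        have key: "(\<forall>l. l \<noteq> j \<longrightarrow> \<bar>Acomp L (i - k + 1 - 1) (chain L (Hc \<tau> L) (i - k + 1) k x) $ l\<bar> \<le> (1 - \<delta>) + k * c * (r' * \<tau>) * M) \<and>
           \<bar>Acomp L (i - k + 1 - 1) (chain L (Hc \<tau> L) (i - k + 1) k x) $ j\<bar> \<le> (1 - c)^k * ((1 - \<delta>) * \<tau>)"
        proof (rule chain_lemma)
          show "Acomp L i' (Hc \<tau> L i' y) = Acomp L i' y - (c * Acomp L i' y $ j) *\<^sub>R u i'"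
            if "i' \<in> {1..n}" "\<forall>m. m \<noteq> j \<longrightarrow> \<bar>Acomp L i' y $ m\<bar> \<le> r" "\<bar>Acomp L i' y $ j\<bar> \<le> r' * \<tau>" for i' y
            unfolding Hc_def u_def by (rule Hmap_step) (use AL[OF that(1)] r r' t that(2,3) in auto)
          show "\<bar>u i' $ m\<bar> \<le> M" if "i' \<in> {1..n}" "m \<noteq> j" for i' m
          proof -
            have "\<bar>u i' $ m\<bar> \<le> Mi i'" unfolding u_def Mi_def by (rule Aw_m) (use AL[OF that(1)] in auto)
            then show ?thesis using MiM[OF that(1)] by linarith
          qed
          show "u i' $ j = 1" if "i' \<in> {1..n}" for i'
            unfolding u_def by (rule Aw_j) (use AL[OF that] in auto)
          show "0 \<le> c" "c \<le> 1" using c by auto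
          show "0 \<le> M" by (rule M0)
          show "0 \<le> r' * \<tau>" by (rule s0)
          show "1 \<le> i - k + 1" by simp
          show "i - k + 1 + k - 1 \<le> n" using ik by simp
          show "\<forall>l. l \<noteq> j \<longrightarrow> \<bar>Acomp L (i - k + 1 + k - 1) x $ l\<bar> \<le> 1 - \<delta>"
            using xb ik by (simp add: jbox_def)
          show "1 - \<delta> + real k * c * (r' * \<tau>) * M \<le> r"
          proof -
            have "real k * c * (r' * \<tau>) * M = r' * (\<tau> * (real k * c * M))" by (simp add: algebra_simps)
            also have "\<dots> \<le> 1 * (\<delta> / 2)"
              using r' tkcM[OF t] t kcM by (intro mult_mono) auto
            finally show ?thesis by (simp add: r_def)
          qed
          show "\<bar>Acomp L (i - k + 1 + k - 1) x $ j\<bar> \<le> (1 - \<delta>) * \<tau>"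
            using xb ik by (simp add: jbox_def)
          show "(1 - \<delta>) * \<tau> \<le> r' * \<tau>" by (simp add: r'_def)
        qed
        have ik': "i - k + 1 - 1 = i - k" by simp
        have "(1 - c)^k * ((1 - \<delta>) * \<tau>) \<le> \<delta> * \<tau>"
          using k del t c by (intro mult_mono) auto
        moreover have "1 - \<delta> + k * c * (r' * \<tau>) * M \<le> 1"
        proof -
          have "real k * c * (r' * \<tau>) * M = r' * (\<tau> * (real k * c * M))" by (simp add: algebra_simps)
          also have "\<dots> \<le> 1 * (\<delta> / 2)"
            using r' tkcM[OF t] t kcM by (intro mult_mono) auto
          finally show ?thesis using del by simp
        qed
        ultimately have "Acomp L (i - k) z \<in> jbox j 1 (\<delta> * \<tau>)"
          using key unfolding ik' z jbox_def by (auto intro: order_trans)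
        then show "z \<in> iter_pre L (jbox j 1 (\<delta> * \<tau>)) (i - k)" by (simp add: iter_pre_Acomp)
      qed
    qed
  qed
qed


end
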